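(* Let $G$ be a classical subgroup of $\mathrm{GL}(N+1,\mathbb{C})$ (for instance $G=\mathrm{SL}(N+1,\mathbb{C})$), let $V$ and $W$ be finite-dimensional rational complex representations of $G$ equipped with Hermitian norms $\|\cdot\|$, and let $v\in V\setminus\{0\}$, $w\in W\setminus\{0\}$. Define $p_{v,w}:G\to\mathbb{R}$ by $p_{v,w}(\sigma)=\log\|\sigma(w)\|^2-\log\|\sigma(v)\|^2$. Then $p_{v,w}$ is proper along every one-parameter subgroup of $G$ (i.e. $p_{v,w}(\lambda(t))\to+\infty$ as $t\to0$ for every one-parameter subgroup $\lambda$) if and only if $(v,w)$ is numerically stable; and $p_{v,w}$ is bounded from below along every one-parameter subgroup of $G$ (i.e. $p_{v,w}(\lambda(t))$ is bounded below as $t\to0$ for every one-parameter subgroup $\lambda$) if and only if $(v,w)$ is numerically semistable.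
   Context: A one-parameter subgroup of $G$ is a non-trivial algebraic group homomorphism $\lambda:\mathbb{C}^*\to G$. For a representation $V$, $x\in V\setminus\{0\}$ and a one-parameter subgroup $\lambda$, the weight $w_\lambda(x)$ is the unique integer such that $\lim_{\alpha\to0}\alpha^{-w_\lambda(x)}\lambda(\alpha)x$ exists in $V$ and is non-zero. The pair $(v,w)$ is numerically semistable if $w_\lambda(w)\le w_\lambda(v)$ for all one-parameter subgroups $\lambda$ of $G$, and numerically stable if $w_\lambda(w)<w_\lambda(v)$ for all one-parameter subgroups $\lambda$ of $G$. *)

theory Defs
  imports "HOL-Analysis.Analysis"
begin

text \<open>Matrices are indexed by a finite type 'n (so n = CARD('n) = N+1).
  The classical groups: GL, SL, the orthogonal group O(B) and special orthogonal
  group SO(B) of a nondegenerate symmetric bilinear form B, and the symplectic group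
  Sp(B) of a nondegenerate alternating bilinear form B.\<close>

definition GL_grp :: "(complex^'n^'n) set" where
  "GL_grp = {A. det A \<noteq> 0}"

definition SL_grp :: "(complex^'n^'n) set" where
  "SL_grp = {A. det A = 1}"

definition form_grp :: "complex^'n^'n \<Rightarrow> (complex^'n^'n) set" where
  "form_grp B = {A. det A \<noteq> 0 \<and> transpose A ** B ** A = B}"

definition classical_subgroup :: "(complex^'n^'n) set \<Rightarrow> bool" where
  "classical_subgroup G \<longleftrightarrow>
     G = GL_grp \<or> G = SL_grp \<or>
     (\<exists>B. det B \<noteq> 0 \<and> transpose B = B \<and> (G = form_grp B \<or> G = form_grp B \<inter> SL_grp)) \<or>
     (\<exists>B. det B \<noteq> 0 \<and> transpose B = - B \<and> G = form_grp B)"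

text \<open>Polynomial functions in the matrix entries and the inverse of the determinant
  (the regular functions on GL).\<close>

inductive_set regular_fun :: "(complex^'n^'n \<Rightarrow> complex) set" where
  const: "(\<lambda>A. c) \<in> regular_fun"
| entry: "(\<lambda>A. A $ i $ j) \<in> regular_fun"
| invdet: "(\<lambda>A. inverse (det A)) \<in> regular_fun"
| add: "f \<in> regular_fun \<Longrightarrow> g \<in> regular_fun \<Longrightarrow> (\<lambda>A. f A + g A) \<in> regular_fun"
| mult: "f \<in> regular_fun \<Longrightarrow> g \<in> regular_fun \<Longrightarrow> (\<lambda>A. f A * g A) \<in> regular_fun"

definition rational_rep :: "(complex^'n^'n) set \<Rightarrow> (complex^'n^'n \<Rightarrow> complex^'v^'v) \<Rightarrow> bool" where
  "rational_rep G \<rho> \<longleftrightarrow>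
     (\<forall>\<sigma>\<in>G. invertible (\<rho> \<sigma>)) \<and>
     (\<forall>\<sigma>\<in>G. \<forall>\<tau>\<in>G. \<rho> (\<sigma> ** \<tau>) = \<rho> \<sigma> ** \<rho> \<tau>) \<and>
     (\<forall>i j. \<exists>f\<in>regular_fun. \<forall>\<sigma>\<in>G. \<rho> \<sigma> $ i $ j = f \<sigma>)"

definition herm_norm_sq :: "complex^'v^'v \<Rightarrow> complex^'v \<Rightarrow> real" where
  "herm_norm_sq H x = Re (\<Sum>i\<in>UNIV. \<Sum>j\<in>UNIV. cnj (x $ i) * H $ i $ j * x $ j)"

definition hermitian_pd :: "complex^'v^'v \<Rightarrow> bool" where
  "hermitian_pd H \<longleftrightarrow> (\<forall>i j. H $ i $ j = cnj (H $ j $ i)) \<and> (\<forall>x. x \<noteq> 0 \<longrightarrow> herm_norm_sq H x > 0)"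

definition laurent_fun :: "(complex \<Rightarrow> complex) \<Rightarrow> bool" where
  "laurent_fun f \<longleftrightarrow> (\<exists>K c. finite K \<and> (\<forall>\<alpha>. \<alpha> \<noteq> 0 \<longrightarrow> f \<alpha> = (\<Sum>k\<in>K. c k * \<alpha> powi k)))"

text \<open>A non-trivial algebraic group homomorphism C^* \<rightarrow> G (values at 0 are irrelevant).\<close>

definition one_param_subgroup :: "(complex^'n^'n) set \<Rightarrow> (complex \<Rightarrow> complex^'n^'n) \<Rightarrow> bool" where
  "one_param_subgroup G l \<longleftrightarrow>
     (\<forall>\<alpha>. \<alpha> \<noteq> 0 \<longrightarrow> l \<alpha> \<in> G) \<and>
     (\<forall>\<alpha> \<beta>. \<alpha> \<noteq> 0 \<longrightarrow> \<beta> \<noteq> 0 \<longrightarrow> l (\<alpha> * \<beta>) = l \<alpha> ** l \<beta>) \<and>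
     (\<forall>i j. laurent_fun (\<lambda>\<alpha>. l \<alpha> $ i $ j)) \<and>
     (\<exists>\<alpha>. \<alpha> \<noteq> 0 \<and> l \<alpha> \<noteq> mat 1)"

definition weight :: "(complex^'n^'n \<Rightarrow> complex^'v^'v) \<Rightarrow> (complex \<Rightarrow> complex^'n^'n) \<Rightarrow> complex^'v \<Rightarrow> int" where
  "weight \<rho> l x = (THE k::int. \<exists>L. L \<noteq> 0 \<and>
      ((\<lambda>\<alpha>. (\<alpha> powi (- k)) *s (\<rho> (l \<alpha>) *v x)) \<longlongrightarrow> L) (at 0))"

definition num_semistable where
  "num_semistable G \<rho>V \<rho>W v w \<longleftrightarrow>
     (\<forall>l. one_param_subgroup G l \<longrightarrow> weight \<rho>W l w \<le> weight \<rho>V l v)"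

definition num_stable where
  "num_stable G \<rho>V \<rho>W v w \<longleftrightarrow>
     (\<forall>l. one_param_subgroup G l \<longrightarrow> weight \<rho>W l w < weight \<rho>V l v)"

definition p_vw :: "complex^'v^'v \<Rightarrow> complex^'w^'w \<Rightarrow> (complex^'n^'n \<Rightarrow> complex^'v^'v)
    \<Rightarrow> (complex^'n^'n \<Rightarrow> complex^'w^'w) \<Rightarrow> complex^'v \<Rightarrow> complex^'w \<Rightarrow> complex^'n^'n \<Rightarrow> real" where
  "p_vw HV HW \<rho>V \<rho>W v w \<sigma> = ln (herm_norm_sq HW (\<rho>W \<sigma> *v w)) - ln (herm_norm_sq HV (\<rho>V \<sigma> *v v))"

end

theory Submission imports Defs "HOL-Computational_Algebra.Polynomial" begin

definition pf :: "(complex \<Rightarrow> complex) \<Rightarrow> bool" where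
  "pf f \<longleftrightarrow> (\<exists>N p. \<forall>\<alpha>. \<alpha> \<noteq> 0 \<longrightarrow> f \<alpha> = poly p \<alpha> / \<alpha> ^ N)"

lemma pf_cong: "pf f \<Longrightarrow> (\<And>\<alpha>. \<alpha> \<noteq> 0 \<Longrightarrow> g \<alpha> = f \<alpha>) \<Longrightarrow> pf g"
  unfolding pf_def by metis

lemma pf_const: "pf (\<lambda>\<alpha>. c)"
  unfolding pf_def by (rule exI[of _ 0], rule exI[of _ "[:c:]"]) simp

lemma pf_add: assumes "pf f" "pf g" shows "pf (\<lambda>\<alpha>. f \<alpha> + g \<alpha>)"
proof -
  obtain N p where p: "\<And>\<alpha>. \<alpha> \<noteq> 0 \<Longrightarrow> f \<alpha> = poly p \<alpha> / \<alpha> ^ N" using assms(1) unfolding pf_def by blast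
  obtain M q where q: "\<And>\<alpha>. \<alpha> \<noteq> 0 \<Longrightarrow> g \<alpha> = poly q \<alpha> / \<alpha> ^ M" using assms(2) unfolding pf_def by blast
  show ?thesis unfolding pf_def
  proof (intro exI allI impI)
    fix \<alpha> :: complex assume a: "\<alpha> \<noteq> 0"
    show "f \<alpha> + g \<alpha> = poly (p * monom 1 M + q * monom 1 N) \<alpha> / \<alpha> ^ (N + M)"
      using a by (simp add: p q poly_monom field_simps power_add)
  qed
qed

lemma pf_mult: assumes "pf f" "pf g" shows "pf (\<lambda>\<alpha>. f \<alpha> * g \<alpha>)"
proof -
  obtain N p where p: "\<And>\<alpha>. \<alpha> \<noteq> 0 \<Longrightarrow> f \<alpha> = poly p \<alpha> / \<alpha> ^ N" using assms(1) unfolding pf_def by blast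
  obtain M q where q: "\<And>\<alpha>. \<alpha> \<noteq> 0 \<Longrightarrow> g \<alpha> = poly q \<alpha> / \<alpha> ^ M" using assms(2) unfolding pf_def by blast
  show ?thesis unfolding pf_def
  proof (intro exI allI impI)
    fix \<alpha> :: complex assume a: "\<alpha> \<noteq> 0"
    show "f \<alpha> * g \<alpha> = poly (p * q) \<alpha> / \<alpha> ^ (N + M)"
      using a by (simp add: p q field_simps power_add)
  qed
qed

lemma pf_sum: "finite S \<Longrightarrow> (\<And>i. i \<in> S \<Longrightarrow> pf (f i)) \<Longrightarrow> pf (\<lambda>\<alpha>. \<Sum>i\<in>S. f i \<alpha>)"
  by (induction S rule: finite_induct) (auto intro: pf_add pf_const)

lemma pf_prod: "finite S \<Longrightarrow> (\<And>i. i \<in> S \<Longrightarrow> pf (f i)) \<Longrightarrow> pf (\<lambda>\<alpha>. \<Prod>i\<in>S. f i \<alpha>)"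
  by (induction S rule: finite_induct) (auto intro: pf_mult pf_const)

lemma pf_inv_var: assumes "pf f" shows "pf (\<lambda>\<alpha>. f (inverse \<alpha>))"
proof -
  obtain N p where p: "\<And>\<alpha>. \<alpha> \<noteq> 0 \<Longrightarrow> f \<alpha> = poly p \<alpha> / \<alpha> ^ N" using assms(1) unfolding pf_def by blast
  show ?thesis unfolding pf_def
  proof (intro exI allI impI)
    fix \<alpha> :: complex assume a: "\<alpha> \<noteq> 0"
    show "f (inverse \<alpha>) = poly (reflect_poly p * monom 1 N) \<alpha> / \<alpha> ^ degree p"
      using a by (simp add: p poly_reflect_poly_nz poly_monom field_simps power_inverse)
  qed
qed

lemma pf_laurent: assumes "laurent_fun f" shows "pf f"
proof -
  obtain K c where K: "finite K" and f: "\<And>\<alpha>. \<alpha> \<noteq> 0 \<Longrightarrow> f \<alpha> = (\<Sum>k\<in>K. c k * \<alpha> powi k)"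
    using assms unfolding laurent_fun_def by blast
  define N where "N = (\<Sum>k\<in>K. nat (-k))"
  have kN: "k + int N \<ge> 0" if "k \<in> K" for k
  proof -
    have "nat (-k) \<le> N" unfolding N_def using K that
      by (intro member_le_sum) auto
    then show ?thesis by linarith
  qed
  show ?thesis unfolding pf_def
  proof (intro exI allI impI)
    fix \<alpha> :: complex assume a: "\<alpha> \<noteq> 0"
    have "f \<alpha> = (\<Sum>k\<in>K. c k * \<alpha> ^ nat (k + int N) / \<alpha> ^ N)"
      unfolding f[OF a]
    proof (rule sum.cong[OF refl])
      fix k assume "k \<in> K"
      have "\<alpha> ^ nat (k + int N) = \<alpha> powi (k + int N)"
        using kN[OF \<open>k \<in> K\<close>] by (simp add: power_int_nonneg_exp)
      also have "\<dots> = \<alpha> powi k * \<alpha> ^ N" using a by (simp add: power_int_add)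
      finally show "c k * \<alpha> powi k = c k * \<alpha> ^ nat (k + int N) / \<alpha> ^ N" using a by simp
    qed
    also have "\<dots> = poly (\<Sum>k\<in>K. monom (c k) (nat (k + int N))) \<alpha> / \<alpha> ^ N"
      by (simp add: poly_sum poly_monom sum_divide_distrib)
    finally show "f \<alpha> = poly (\<Sum>k\<in>K. monom (c k) (nat (k + int N))) \<alpha> / \<alpha> ^ N" .
  qed
qed

lemma classical_det: "classical_subgroup G \<Longrightarrow> A \<in> G \<Longrightarrow> det A \<noteq> 0"
  unfolding classical_subgroup_def GL_grp_def SL_grp_def form_grp_def by auto

lemma ops_one:
  assumes "classical_subgroup G" "one_param_subgroup G l"
  shows "l 1 = mat 1"
proof -
  have l1G: "l 1 \<in> G" using assms(2) unfolding one_param_subgroup_def by auto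
  have sq: "l 1 = l 1 ** l 1" using assms(2) unfolding one_param_subgroup_def
    by (metis mult_1 one_neq_zero)
  have "invertible (l 1)" using classical_det[OF assms(1) l1G] invertible_det_nz by blast
  then obtain B where B: "B ** l 1 = mat 1" unfolding invertible_def by blast
  have "mat 1 = B ** (l 1 ** l 1)" using B sq by simp
  also have "\<dots> = l 1" by (simp add: matrix_mul_assoc B)
  finally show ?thesis by simp
qed

lemma ops_invdet:
  assumes "classical_subgroup G" "one_param_subgroup G l" "\<alpha> \<noteq> 0"
  shows "inverse (det (l \<alpha>)) = det (l (inverse \<alpha>))"
proof -
  have "l 1 = l \<alpha> ** l (inverse \<alpha>)" using assms(2,3) unfolding one_param_subgroup_def
    by (metis right_inverse inverse_nonzero_iff_nonzero)
  then have "det (l \<alpha>) * det (l (inverse \<alpha>)) = 1" using ops_one[OF assms(1,2)] by (metis det_mul det_I)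
  then show ?thesis by (metis inverse_unique)
qed

lemma pf_det: assumes "\<And>i j. pf (\<lambda>\<alpha>. F \<alpha> $ i $ j)" shows "pf (\<lambda>\<alpha>. det (F \<alpha>))"
  unfolding det_def
  by (intro pf_sum pf_mult pf_const pf_prod assms) auto

lemma pf_regular:
  assumes "classical_subgroup G" "one_param_subgroup G l" "f \<in> regular_fun"
  shows "pf (\<lambda>\<alpha>. f (l \<alpha>))"
  using assms(3)
proof induction
  case (const c) then show ?case by (rule pf_const)
next
  case (entry i j) then show ?case using assms(2) unfolding one_param_subgroup_def
    by (auto intro: pf_laurent)
next
  case invdet
  have e: "pf (\<lambda>\<alpha>. l \<alpha> $ i $ j)" for i j using assms(2) unfolding one_param_subgroup_def
    by (auto intro: pf_laurent)
  have "pf (\<lambda>\<alpha>. det (l (inverse \<alpha>)))"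
    by (rule pf_det, rule pf_inv_var[of "\<lambda>\<alpha>. l \<alpha> $ _ $ _", OF e])
  then show ?case by (rule pf_cong) (simp add: ops_invdet[OF assms(1,2)])
next
  case (add f g) then show ?case by (intro pf_add) auto
next
  case (mult f g) then show ?case by (intro pf_mult) auto
qed

lemma pf_rep:
  assumes "classical_subgroup G" "one_param_subgroup G l" "rational_rep G \<rho>"
  shows "pf (\<lambda>\<alpha>. (\<rho> (l \<alpha>) *v x) $ i)"
proof -
  have ent: "pf (\<lambda>\<alpha>. \<rho> (l \<alpha>) $ i $ j)" for i j
  proof -
    obtain f where f: "f \<in> regular_fun" "\<And>\<sigma>. \<sigma> \<in> G \<Longrightarrow> \<rho> \<sigma> $ i $ j = f \<sigma>"
      using assms(3) unfolding rational_rep_def by blast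
    show ?thesis
      by (rule pf_cong[OF pf_regular[OF assms(1,2) f(1)]])
        (use f(2) assms(2) in \<open>auto simp: one_param_subgroup_def\<close>)
  qed
  show ?thesis unfolding matrix_vector_mult_def
    by (simp, intro pf_sum pf_mult pf_const ent) auto
qed

lemma pf_vec_limit:
  fixes x :: "complex \<Rightarrow> complex^'v"
  assumes pfx: "\<And>i. pf (\<lambda>\<alpha>. x \<alpha> $ i)" and nz: "\<And>\<alpha>. \<alpha> \<noteq> 0 \<Longrightarrow> x \<alpha> \<noteq> 0"
  shows "\<exists>k L. L \<noteq> 0 \<and> ((\<lambda>\<alpha>. \<alpha> powi (-k) *s x \<alpha>) \<longlongrightarrow> L) (at 0)"
proof -
  have "\<forall>i. \<exists>N p. \<forall>\<alpha>. \<alpha> \<noteq> 0 \<longrightarrow> x \<alpha> $ i = poly p \<alpha> / \<alpha> ^ N"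
    using pfx unfolding pf_def by blast
  then obtain N P where NP: "\<And>i \<alpha>. \<alpha> \<noteq> 0 \<Longrightarrow> x \<alpha> $ i = poly (P i) \<alpha> / \<alpha> ^ N i"
    by metis
  define M where "M = (\<Sum>i\<in>UNIV. N i)"
  have NM: "N i \<le> M" for i unfolding M_def by (intro member_le_sum) auto
  define Q where "Q i = P i * monom 1 (M - N i)" for i
  have xQ: "x \<alpha> $ i = poly (Q i) \<alpha> / \<alpha> ^ M" if a: "\<alpha> \<noteq> 0" for \<alpha> i
  proof -
    have "\<alpha> ^ M = \<alpha> ^ N i * \<alpha> ^ (M - N i)" using NM[of i] by (simp add: power_add[symmetric])
    then show ?thesis using a by (simp add: NP Q_def poly_monom)
  qed
  define S where "S = {i. Q i \<noteq> 0}"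
  have "S \<noteq> {}"
  proof
    assume "S = {}"
    then have "x 1 $ i = 0" for i using xQ[of 1 i] by (simp add: S_def)
    then have "x 1 = 0" by (simp add: vec_eq_iff)
    with nz[of 1] show False by simp
  qed
  define m where "m = Min ((\<lambda>i. order 0 (Q i)) ` S)"
  have "m \<in> (\<lambda>i. order 0 (Q i)) ` S" unfolding m_def
    by (rule Min_in) (use \<open>S \<noteq> {}\<close> in auto)
  then obtain i0 where i0: "i0 \<in> S" "order 0 (Q i0) = m" by auto
  define R where "R i = Q i div [:0,1:] ^ m" for i
  have QR: "Q i = [:0,1:] ^ m * R i" for i
  proof -
    have "[:0,1:] ^ m dvd Q i"
    proof (cases "Q i = 0")
      case False
      then have "m \<le> order 0 (Q i)" unfolding m_def S_def by (intro Min_le) auto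
      then have "[:0,1:] ^ m dvd [:0,1:] ^ order 0 (Q i)" using le_imp_power_dvd[of m "order 0 (Q i)" "[:0,1:]"] by simp
      moreover have "[:0,1:] ^ order 0 (Q i) dvd Q i" using order_1[of 0 "Q i"] by simp
      ultimately show ?thesis by (metis dvd_trans)
    qed simp
    then show ?thesis unfolding R_def by simp
  qed
  have R0: "poly (R i0) 0 \<noteq> 0"
  proof
    assume "poly (R i0) 0 = 0"
    then have "[:0,1:] dvd R i0" using poly_eq_0_iff_dvd[of "R i0" 0] by simp
    then have "[:0,1:] ^ Suc m dvd Q i0"
      using QR[of i0] mult_dvd_mono[OF dvd_refl[of "[:0,1:]^m"], of "[:0,1:]" "R i0"] by (metis power_Suc2)
    then show False using order_2[of "Q i0" 0] i0 unfolding S_def by simp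
  qed
  define L where "L = (\<chi> i. poly (R i) 0)"
  have "L \<noteq> 0" using R0 unfolding L_def by (metis vec_lambda_beta zero_index)
  moreover have "((\<lambda>\<alpha>. \<alpha> powi (- (int m - int M)) *s x \<alpha>) \<longlongrightarrow> L) (at 0)"
  proof (rule Lim_transform_eventually)
    show "((\<lambda>\<alpha>. \<chi> i. poly (R i) \<alpha>) \<longlongrightarrow> L) (at 0)"
      unfolding L_def by (intro tendsto_intros)
    show "\<forall>\<^sub>F \<alpha> in at 0. (\<chi> i. poly (R i) \<alpha>) = \<alpha> powi (- (int m - int M)) *s x \<alpha>"
      unfolding eventually_at_filter
    proof (intro always_eventually allI impI)
      fix \<alpha> :: complex assume a: "\<alpha> \<noteq> 0"
      have "\<alpha> powi (int M - int m) * \<alpha> powi (int m) = \<alpha> powi (int M - int m + int m)"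
        using a power_int_add[of \<alpha> "int M - int m" "int m"] by simp
      then have e: "\<alpha> powi (int M - int m) * \<alpha> ^ m = \<alpha> ^ M" by simp
      show "(\<chi> i. poly (R i) \<alpha>) = \<alpha> powi (- (int m - int M)) *s x \<alpha>"
        unfolding vec_eq_iff using a
        by (auto simp: xQ QR e[symmetric] field_simps)
    qed
  qed
  ultimately show ?thesis by blast
qed

lemma neg_ln_at0: "filterlim (\<lambda>\<alpha>::complex. - ln (cmod \<alpha>)) at_top (at 0)"
  unfolding filterlim_at_top
proof
  fix Z :: real
  show "\<forall>\<^sub>F \<alpha> in at 0. Z \<le> - ln (cmod \<alpha>)"
    unfolding eventually_at
  proof (intro exI[of _ "exp (- Z)"] conjI ballI impI)
    show "0 < exp (- Z)" by simp
  next
    fix \<alpha> :: complex assume "\<alpha> \<in> UNIV" "\<alpha> \<noteq> 0 \<and> dist \<alpha> 0 < exp (- Z)"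
    then have "0 < cmod \<alpha>" "cmod \<alpha> < exp (-Z)" by auto
    then have "ln (cmod \<alpha>) < -Z" by (metis ln_exp ln_less_cancel_iff exp_gt_zero)
    then show "Z \<le> - ln (cmod \<alpha>)" by simp
  qed
qed

lemma neg_ln_pos: "\<forall>\<^sub>F \<alpha>::complex in at 0. 0 \<le> - ln (cmod \<alpha>)"
  using neg_ln_at0 unfolding filterlim_at_top by blast

lemma asym:
  fixes P g :: "complex \<Rightarrow> real" and kV kW :: int
  assumes ev: "\<forall>\<^sub>F \<alpha> in at 0. P \<alpha> = 2 * of_int (kV - kW) * (- ln (cmod \<alpha>)) + g \<alpha>"
    and g: "(g \<longlongrightarrow> c0) (at 0)"
  shows "filterlim P at_top (at 0) \<longleftrightarrow> kW < kV"
    and "(\<exists>C. \<forall>\<^sub>F \<alpha> in at 0. C \<le> P \<alpha>) \<longleftrightarrow> kW \<le> kV"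
proof -
  define d where "d = real_of_int (kV - kW)"
  have ev': "\<forall>\<^sub>F \<alpha> in at 0. P \<alpha> = 2 * d * (- ln (cmod \<alpha>)) + g \<alpha>" using ev by (simp add: d_def)
  have nt: "at (0::complex) \<noteq> bot" by simp
  have top: "filterlim P at_top (at 0)" if "d > 0"
  proof -
    have "filterlim (\<lambda>\<alpha>. 2 * d * (- ln (cmod \<alpha>))) at_top (at (0::complex))"
      by (rule filterlim_tendsto_pos_mult_at_top[OF tendsto_const _ neg_ln_at0]) (use that in simp)
    then have "filterlim (\<lambda>\<alpha>. 2 * d * (- ln (cmod \<alpha>)) + g \<alpha>) at_top (at (0::complex))"
      by (rule filterlim_tendsto_add_at_top[OF g, unfolded add.commute[of "g _"]])
    then show ?thesis using filterlim_cong[OF refl refl ev'] by simp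
  qed
  have le: "\<forall>\<^sub>F \<alpha> in at 0. P \<alpha> \<le> g \<alpha>" if "d \<le> 0"
    using ev' neg_ln_pos
    by eventually_elim (use that in \<open>simp add: mult_nonpos_nonpos\<close>)
  have ge: "\<forall>\<^sub>F \<alpha> in at 0. g \<alpha> \<le> P \<alpha>" if "d \<ge> 0"
    using ev' neg_ln_pos
    by eventually_elim (use that in \<open>simp add: mult_nonneg_nonpos\<close>)
  have bot: "filterlim (\<lambda>\<alpha>. - P \<alpha>) at_top (at 0)" if "d < 0"
  proof -
    have "filterlim (\<lambda>\<alpha>. 2 * (-d) * (- ln (cmod \<alpha>))) at_top (at (0::complex))"
      by (rule filterlim_tendsto_pos_mult_at_top[OF tendsto_const _ neg_ln_at0]) (use that in simp)
    then have A: "filterlim (\<lambda>\<alpha>. 2 * (-d) * (- ln (cmod \<alpha>)) + - g \<alpha>) at_top (at (0::complex))"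
      by (rule filterlim_tendsto_add_at_top[OF tendsto_minus[OF g], unfolded add.commute[of "- g _"]])
    have eq: "\<forall>\<^sub>F \<alpha> in at 0. 2 * (-d) * (- ln (cmod \<alpha>)) + - g \<alpha> = - P \<alpha>"
      using ev' by eventually_elim simp
    show ?thesis using A filterlim_cong[OF refl refl eq] by simp
  qed
  show "filterlim P at_top (at 0) \<longleftrightarrow> kW < kV"
  proof
    assume lim: "filterlim P at_top (at 0)"
    show "kW < kV"
    proof (rule ccontr)
      assume "\<not> kW < kV"
      then have "d \<le> 0" unfolding d_def by simp
      have "\<forall>\<^sub>F \<alpha> in at 0. c0 + 1 \<le> P \<alpha>" using lim unfolding filterlim_at_top by blast
      moreover have "\<forall>\<^sub>F \<alpha> in at 0. g \<alpha> < c0 + 1" using order_tendstoD(2)[OF g, of "c0+1"] by simp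
      moreover note le[OF \<open>d \<le> 0\<close>]
      ultimately have "\<forall>\<^sub>F \<alpha> in at (0::complex). False" by eventually_elim simp
      with nt show False by (simp add: eventually_False)
    qed
  next
    assume "kW < kV" then show "filterlim P at_top (at 0)" by (intro top) (simp add: d_def)
  qed
  show "(\<exists>C. \<forall>\<^sub>F \<alpha> in at 0. C \<le> P \<alpha>) \<longleftrightarrow> kW \<le> kV"
  proof
    assume "\<exists>C. \<forall>\<^sub>F \<alpha> in at 0. C \<le> P \<alpha>"
    then obtain C where C: "\<forall>\<^sub>F \<alpha> in at 0. C \<le> P \<alpha>" by blast
    show "kW \<le> kV"
    proof (rule ccontr)
      assume "\<not> kW \<le> kV"
      then have "d < 0" unfolding d_def by simp
      have "\<forall>\<^sub>F \<alpha> in at 0. 1 - C \<le> - P \<alpha>" using bot[OF \<open>d < 0\<close>] unfolding filterlim_at_top by blast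
      with C have "\<forall>\<^sub>F \<alpha> in at (0::complex). False" by eventually_elim simp
      with nt show False by (simp add: eventually_False)
    qed
  next
    assume "kW \<le> kV"
    then have "d \<ge> 0" unfolding d_def by simp
    have "\<forall>\<^sub>F \<alpha> in at 0. c0 - 1 < g \<alpha>" using order_tendstoD(1)[OF g, of "c0-1"] by simp
    with ge[OF \<open>d \<ge> 0\<close>] have "\<forall>\<^sub>F \<alpha> in at 0. c0 - 1 \<le> P \<alpha>" by eventually_elim simp
    then show "\<exists>C. \<forall>\<^sub>F \<alpha> in at 0. C \<le> P \<alpha>" by blast
  qed
qed

lemma tendsto_smult_vec:
  fixes y :: "'a \<Rightarrow> complex^'v"
  assumes "(c \<longlongrightarrow> a) F" "(y \<longlongrightarrow> b) F"
  shows "((\<lambda>\<alpha>. c \<alpha> *s y \<alpha>) \<longlongrightarrow> a *s b) F"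
proof -
  have e1: "(\<lambda>\<alpha>. c \<alpha> *s y \<alpha>) = (\<lambda>\<alpha>. \<chi> i. c \<alpha> * y \<alpha> $ i)" by (rule ext) (simp add: vec_eq_iff)
  have e2: "a *s b = (\<chi> i. a * b $ i)" by (simp add: vec_eq_iff)
  show ?thesis unfolding e1 e2 by (intro tendsto_intros assms)
qed

lemma hns_smult: "herm_norm_sq H (c *s y) = (cmod c)^2 * herm_norm_sq H y"
proof -
  have "(\<Sum>i\<in>UNIV. \<Sum>j\<in>UNIV. cnj ((c *s y) $ i) * H $ i $ j * (c *s y) $ j)
      = (c * cnj c) * (\<Sum>i\<in>UNIV. \<Sum>j\<in>UNIV. cnj (y $ i) * H $ i $ j * y $ j)"
    by (simp add: sum_distrib_left mult_ac)
  also have "c * cnj c = of_real ((cmod c)^2)" using complex_norm_square[of c] by simp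
  finally show ?thesis unfolding herm_norm_sq_def by simp
qed

lemma hns_tendsto:
  assumes "(y \<longlongrightarrow> L) F"
  shows "((\<lambda>\<alpha>. herm_norm_sq H (y \<alpha>)) \<longlongrightarrow> herm_norm_sq H L) F"
  unfolding herm_norm_sq_def by (intro tendsto_intros assms)

lemma weight_unique_aux:
  fixes x :: "complex \<Rightarrow> complex^'v"
  assumes "((\<lambda>\<alpha>. \<alpha> powi (-k) *s x \<alpha>) \<longlongrightarrow> L) (at 0)" "L \<noteq> 0"
    "((\<lambda>\<alpha>. \<alpha> powi (-k') *s x \<alpha>) \<longlongrightarrow> L') (at 0)" "k < k'"
  shows False
proof -
  have lim1: "((\<lambda>\<alpha>. \<alpha> ^ nat (k' - k) *s (\<alpha> powi (-k') *s x \<alpha>)) \<longlongrightarrow> 0 ^ nat (k' - k) *s L') (at 0)"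
    by (intro tendsto_smult_vec assms tendsto_intros)
  have eq0: "0 ^ nat (k' - k) *s L' = (0::complex^'v)" using assms(4) by simp
  have ev: "\<forall>\<^sub>F \<alpha> in at 0. \<alpha> ^ nat (k' - k) *s (\<alpha> powi (-k') *s x \<alpha>) = \<alpha> powi (-k) *s x \<alpha>"
    unfolding eventually_at_filter
  proof (intro always_eventually allI impI)
    fix \<alpha> :: complex assume a: "\<alpha> \<noteq> 0"
    have "\<alpha> ^ nat (k' - k) * \<alpha> powi (-k') = \<alpha> powi (k' - k) * \<alpha> powi (-k')"
      using assms(4) by (simp add: power_int_nonneg_exp)
    also have "\<dots> = \<alpha> powi (k' - k + - k')" using a power_int_add[of \<alpha> "k'-k" "-k'"] by simp
    finally show "\<alpha> ^ nat (k' - k) *s (\<alpha> powi (-k') *s x \<alpha>) = \<alpha> powi (-k) *s x \<alpha>"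
      by (simp add: vector_smult_assoc)
  qed
  have lim0: "((\<lambda>\<alpha>. \<alpha> powi (-k) *s x \<alpha>) \<longlongrightarrow> 0) (at 0)"
    by (rule Lim_transform_eventually[OF lim1[unfolded eq0] ev])
  have "L = 0" by (rule tendsto_unique[OF _ assms(1) lim0]) simp
  with assms(2) show False by simp
qed

lemma weight_prop:
  assumes "classical_subgroup G" "one_param_subgroup G l" "rational_rep G \<rho>" "x \<noteq> 0"
  shows "\<exists>L. L \<noteq> 0 \<and> ((\<lambda>\<alpha>. \<alpha> powi (- weight \<rho> l x) *s (\<rho> (l \<alpha>) *v x)) \<longlongrightarrow> L) (at 0)"
proof -
  let ?P = "\<lambda>k. \<exists>L. L \<noteq> 0 \<and> ((\<lambda>\<alpha>. \<alpha> powi (- k) *s (\<rho> (l \<alpha>) *v x)) \<longlongrightarrow> L) (at 0)"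
  have nz: "\<rho> (l \<alpha>) *v x \<noteq> 0" if "\<alpha> \<noteq> 0" for \<alpha>
  proof
    assume h: "\<rho> (l \<alpha>) *v x = 0"
    have "l \<alpha> \<in> G" using assms(2) that unfolding one_param_subgroup_def by auto
    then have "invertible (\<rho> (l \<alpha>))" using assms(3) unfolding rational_rep_def by auto
    then obtain B where B: "B ** \<rho> (l \<alpha>) = mat 1" unfolding invertible_def by blast
    have "x = B *v (\<rho> (l \<alpha>) *v x)" by (simp add: matrix_vector_mul_assoc B)
    with h assms(4) show False by simp
  qed
  have ex: "\<exists>k. ?P k"
    by (rule pf_vec_limit) (use pf_rep[OF assms(1,2,3)] nz in auto)
  have un: "k = k'" if "?P k" "?P k'" for k k'
  proof (rule ccontr)
    assume "k \<noteq> k'"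
    then consider "k < k'" | "k' < k" by linarith
    then show False
    proof cases
      case 1
      from that obtain L L' where h: "L \<noteq> 0" "((\<lambda>\<alpha>. \<alpha> powi (- k) *s (\<rho> (l \<alpha>) *v x)) \<longlongrightarrow> L) (at 0)"
        "((\<lambda>\<alpha>. \<alpha> powi (- k') *s (\<rho> (l \<alpha>) *v x)) \<longlongrightarrow> L') (at 0)" by blast
      show False by (rule weight_unique_aux[OF h(2) h(1) h(3) 1])
    next
      case 2
      from that obtain L L' where h: "L' \<noteq> 0" "((\<lambda>\<alpha>. \<alpha> powi (- k) *s (\<rho> (l \<alpha>) *v x)) \<longlongrightarrow> L) (at 0)"
        "((\<lambda>\<alpha>. \<alpha> powi (- k') *s (\<rho> (l \<alpha>) *v x)) \<longlongrightarrow> L') (at 0)" by blast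
      show False by (rule weight_unique_aux[OF h(3) h(1) h(2) 2])
    qed
  qed
  have "?P (THE k. ?P k)" by (rule theI') (use ex un in blast)
  then show ?thesis unfolding weight_def .
qed

lemma ln_hns: fixes r a :: real assumes "r > 0" "a > 0"
  shows "ln ((r powi k)^2 * a) = 2 * of_int k * ln r + ln a"
proof -
  have "(r powi k)^2 = r powr (of_int (2 * k))"
    using powr_real_of_int'[of r "2*k"] assms by (simp add: power_int_power' mult.commute)
  then show ?thesis using assms by (simp add: ln_mult ln_powr)
qed

lemma hns_rep:
  assumes "\<alpha> \<noteq> 0"
  shows "herm_norm_sq H X = (cmod \<alpha> powi k)^2 * herm_norm_sq H (\<alpha> powi (-k) *s X)"
proof -
  have "\<alpha> powi k * \<alpha> powi (-k) = 1" using assms by (simp add: power_int_minus)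
  then have "X = \<alpha> powi k *s (\<alpha> powi (-k) *s X)" by (simp add: vector_smult_assoc)
  then have "herm_norm_sq H X = herm_norm_sq H (\<alpha> powi k *s (\<alpha> powi (-k) *s X))" by simp
  also have "\<dots> = (cmod \<alpha> powi k)^2 * herm_norm_sq H (\<alpha> powi (-k) *s X)"
    by (simp only: hns_smult norm_power_int)
  finally show ?thesis .
qed

lemma per_l:
  fixes G :: "(complex^'n^'n) set"
    and \<rho>V :: "complex^'n^'n \<Rightarrow> complex^'v^'v"
    and \<rho>W :: "complex^'n^'n \<Rightarrow> complex^'w^'w"
    and HV :: "complex^'v^'v" and HW :: "complex^'w^'w"
    and v :: "complex^'v" and w :: "complex^'w"
  assumes "classical_subgroup G" "one_param_subgroup G l"
    and "rational_rep G \<rho>V" and "rational_rep G \<rho>W"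
    and "hermitian_pd HV" and "hermitian_pd HW"
    and "v \<noteq> 0" and "w \<noteq> 0"
  shows "filterlim (\<lambda>t. p_vw HV HW \<rho>V \<rho>W v w (l t)) at_top (at (0::complex))
           \<longleftrightarrow> weight \<rho>W l w < weight \<rho>V l v"
    and "(\<exists>C. \<forall>\<^sub>F t in at (0::complex). C \<le> p_vw HV HW \<rho>V \<rho>W v w (l t))
           \<longleftrightarrow> weight \<rho>W l w \<le> weight \<rho>V l v"
proof -
  define kV where "kV = weight \<rho>V l v"
  define kW where "kW = weight \<rho>W l w"
  obtain LV where LV: "LV \<noteq> 0" "((\<lambda>\<alpha>. \<alpha> powi (- kV) *s (\<rho>V (l \<alpha>) *v v)) \<longlongrightarrow> LV) (at 0)"
    using weight_prop[OF assms(1,2,3,7)] unfolding kV_def by blast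
  obtain LW where LW: "LW \<noteq> 0" "((\<lambda>\<alpha>. \<alpha> powi (- kW) *s (\<rho>W (l \<alpha>) *v w)) \<longlongrightarrow> LW) (at 0)"
    using weight_prop[OF assms(1,2,4,8)] unfolding kW_def by blast
  define a where "a \<alpha> = herm_norm_sq HW (\<alpha> powi (- kW) *s (\<rho>W (l \<alpha>) *v w))" for \<alpha>
  define b where "b \<alpha> = herm_norm_sq HV (\<alpha> powi (- kV) *s (\<rho>V (l \<alpha>) *v v))" for \<alpha>
  have A: "herm_norm_sq HW LW > 0" using assms(6) LW(1) unfolding hermitian_pd_def by blast
  have B: "herm_norm_sq HV LV > 0" using assms(5) LV(1) unfolding hermitian_pd_def by blast
  have ta: "(a \<longlongrightarrow> herm_norm_sq HW LW) (at 0)" unfolding a_def by (rule hns_tendsto[OF LW(2)])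
  have tb: "(b \<longlongrightarrow> herm_norm_sq HV LV) (at 0)" unfolding b_def by (rule hns_tendsto[OF LV(2)])
  define g where "g \<alpha> = ln (a \<alpha>) - ln (b \<alpha>)" for \<alpha>
  have tg: "(g \<longlongrightarrow> ln (herm_norm_sq HW LW) - ln (herm_norm_sq HV LV)) (at 0)"
    unfolding g_def using A B by (intro tendsto_diff tendsto_ln ta tb) auto
  have ea: "\<forall>\<^sub>F \<alpha> in at 0. 0 < a \<alpha>" using order_tendstoD(1)[OF ta A] .
  have eb: "\<forall>\<^sub>F \<alpha> in at 0. 0 < b \<alpha>" using order_tendstoD(1)[OF tb B] .
  have e0: "\<forall>\<^sub>F \<alpha> in at (0::complex). \<alpha> \<noteq> 0" by (simp add: eventually_at_filter)
  have ev: "\<forall>\<^sub>F \<alpha> in at 0. p_vw HV HW \<rho>V \<rho>W v w (l \<alpha>) = 2 * of_int (kV - kW) * (- ln (cmod \<alpha>)) + g \<alpha>"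
    using ea eb e0
  proof eventually_elim
    case (elim \<alpha>)
    have r: "cmod \<alpha> > 0" using elim by simp
    have "p_vw HV HW \<rho>V \<rho>W v w (l \<alpha>) = ln ((cmod \<alpha> powi kW)^2 * a \<alpha>) - ln ((cmod \<alpha> powi kV)^2 * b \<alpha>)"
      unfolding p_vw_def a_def b_def using hns_rep[OF elim(3)] by metis
    also have "\<dots> = (2 * of_int kW * ln (cmod \<alpha>) + ln (a \<alpha>)) - (2 * of_int kV * ln (cmod \<alpha>) + ln (b \<alpha>))"
      using ln_hns[OF r elim(1)] ln_hns[OF r elim(2)] by simp
    finally show ?case unfolding g_def by (simp add: algebra_simps)
  qed
  show "filterlim (\<lambda>t. p_vw HV HW \<rho>V \<rho>W v w (l t)) at_top (at (0::complex))
           \<longleftrightarrow> weight \<rho>W l w < weight \<rho>V l v"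
    using asym(1)[OF ev tg] unfolding kV_def kW_def .
  show "(\<exists>C. \<forall>\<^sub>F t in at (0::complex). C \<le> p_vw HV HW \<rho>V \<rho>W v w (l t))
           \<longleftrightarrow> weight \<rho>W l w \<le> weight \<rho>V l v"
    using asym(2)[OF ev tg] unfolding kV_def kW_def .
qed

theorem theorem4p3:
  fixes G :: "(complex^'n^'n) set"
    and \<rho>V :: "complex^'n^'n \<Rightarrow> complex^'v^'v"
    and \<rho>W :: "complex^'n^'n \<Rightarrow> complex^'w^'w"
    and HV :: "complex^'v^'v" and HW :: "complex^'w^'w"
    and v :: "complex^'v" and w :: "complex^'w"
  assumes "classical_subgroup G"
    and "rational_rep G \<rho>V" and "rational_rep G \<rho>W"
    and "hermitian_pd HV" and "hermitian_pd HW"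
    and "v \<noteq> 0" and "w \<noteq> 0"
  shows "((\<forall>l. one_param_subgroup G l \<longrightarrow>
            filterlim (\<lambda>t. p_vw HV HW \<rho>V \<rho>W v w (l t)) at_top (at (0::complex)))
         \<longleftrightarrow> num_stable G \<rho>V \<rho>W v w)
         \<and> ((\<forall>l. one_param_subgroup G l \<longrightarrow>
            (\<exists>C. \<forall>\<^sub>F t in at (0::complex). C \<le> p_vw HV HW \<rho>V \<rho>W v w (l t)))
         \<longleftrightarrow> num_semistable G \<rho>V \<rho>W v w)"
  unfolding num_stable_def num_semistable_def
  using per_l[OF assms(1) _ assms(2-7)] by blast

end
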